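(* Let $\Psi:\mathbb{R}\to\mathrm{Sp}(\mathbb{R}^{2n})$ be smooth with $\Psi(0)=\mathbb{1}$, $\Psi(t+T)=\Psi(t)\Psi(T)$ and $\Psi(-t)=I_{\mathbb{R}^{2n}}\Psi(t)I_{\mathbb{R}^{2n}}$ for all $t$. Then $\dim\ker(\Psi(T)-\mathbb{1}_{\mathbb{R}^{2n}})=0$ if and only if both $\Psi(T/2)\mathbb{R}^n\cap\mathbb{R}^n=\{0\}$ and $\Psi(T/2)\,i\mathbb{R}^n\cap i\mathbb{R}^n=\{0\}$.
   Context: $I_{\mathbb{R}^{2n}}=\begin{pmatrix}\mathbb{1}_n&0\\0&-\mathbb{1}_n\end{pmatrix}$ on $\mathbb{R}^{2n}=\mathbb{R}^n\oplus i\mathbb{R}^n$ with $\omega_{std}=\sum dx_i\wedge dy_i$; $\mathbb{R}^n=\mathrm{Fix}\,I_{\mathbb{R}^{2n}}$ and $i\mathbb{R}^n=\mathrm{Fix}(-I_{\mathbb{R}^{2n}})$. (Note that the hypotheses imply $\Psi(T)=I_{\mathbb{R}^{2n}}\Psi(T/2)^{-1}I_{\mathbb{R}^{2n}}\Psi(T/2)$.) *)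

theory Defs
  imports "HOL-Analysis.Analysis"
begin

text \<open>R^{2n} = R^n (+) iR^n is modelled as real^('n + 'n): coordinate Inl i is x_i,
  coordinate Inr i is y_i.\<close>

definition omega_std :: "real^('n::finite + 'n) \<Rightarrow> real^('n + 'n) \<Rightarrow> real" where
  "omega_std u v = (\<Sum>i\<in>UNIV. u $ Inl i * v $ Inr i - u $ Inr i * v $ Inl i)"

definition symplectic :: "real^('n::finite + 'n)^('n + 'n) \<Rightarrow> bool" where
  "symplectic A \<longleftrightarrow> (\<forall>u v. omega_std (A *v u) (A *v v) = omega_std u v)"

definition Irefl :: "real^('n::finite + 'n)^('n + 'n)" where
  "Irefl = (\<chi> i j. if i = j then (case i of Inl _ \<Rightarrow> 1 | Inr _ \<Rightarrow> -1) else 0)"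

definition realpart :: "(real^('n::finite + 'n)) set" where
  "realpart = {x. \<forall>i. x $ Inr i = 0}"

definition imagpart :: "(real^('n::finite + 'n)) set" where
  "imagpart = {x. \<forall>i. x $ Inl i = 0}"

definition smooth_curve :: "(real \<Rightarrow> 'a::real_normed_vector) \<Rightarrow> bool" where
  "smooth_curve f \<longleftrightarrow> (\<exists>D :: nat \<Rightarrow> real \<Rightarrow> 'a. D 0 = f \<and>
     (\<forall>k t. (D k has_vector_derivative D (Suc k) t) (at t)))"

end

theory Submission
  imports Defs
begin

lemma Irefl_Inl: "(Irefl *v x) $ Inl i = x $ Inl i"
proof -
  have "(Irefl *v x) $ Inl i = (\<Sum>j\<in>UNIV. if Inl i = j then x$j else 0)"
    unfolding Irefl_def matrix_vector_mult_def vec_lambda_beta by (rule sum.cong) auto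
  then show ?thesis by simp
qed
lemma Irefl_Inr: "(Irefl *v x) $ Inr i = - x $ Inr i"
proof -
  have "(Irefl *v x) $ Inr i = (\<Sum>j\<in>UNIV. if Inr i = j then - x$j else 0)"
    unfolding Irefl_def matrix_vector_mult_def vec_lambda_beta by (rule sum.cong) auto
  then show ?thesis by simp
qed
lemma Irefl_Irefl: "Irefl *v (Irefl *v x) = x"
proof (rule vec_eq_iff[THEN iffD2], rule allI)
  fix k show "(Irefl *v (Irefl *v x)) $ k = x $ k" by (cases k) (simp_all add: Irefl_Inl Irefl_Inr)
qed

lemma sympl_inj:
  assumes "symplectic A" "A *v u = 0" shows "u = 0"
proof -
  define v where "v = (\<chi> k. case k of Inl i \<Rightarrow> - u $ Inr i | Inr i \<Rightarrow> u $ Inl i)"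
  have "omega_std u v = omega_std (A *v u) (A *v v)" using assms(1) by (simp add: symplectic_def)
  also have "\<dots> = 0" using assms(2) by (simp add: omega_std_def)
  finally have "(\<Sum>i\<in>UNIV. (u $ Inl i)^2 + (u $ Inr i)^2) = 0"
    by (simp add: omega_std_def v_def power2_eq_square)
  then have "\<forall>i\<in>UNIV. (u $ Inl i)^2 + (u $ Inr i)^2 = 0"
    by (subst (asm) sum_nonneg_eq_0_iff) auto
  then have "\<forall>i. u $ Inl i = 0 \<and> u $ Inr i = 0"
    by (simp add: sum_power2_eq_zero_iff)
  then show ?thesis
    by (metis sum.exhaust vec_eq_iff zero_index)
qed

lemma Irefl_real: "a \<in> realpart \<Longrightarrow> Irefl *v a = a"
  unfolding realpart_def vec_eq_iff
proof (intro allI)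
  fix k assume "a \<in> {x. \<forall>i. x $ Inr i = 0}"
  then show "(Irefl *v a) $ k = a $ k" by (cases k) (auto simp: Irefl_Inl Irefl_Inr)
qed
lemma Irefl_imag: "a \<in> imagpart \<Longrightarrow> Irefl *v a = - a"
  unfolding imagpart_def vec_eq_iff
proof (intro allI)
  fix k assume "a \<in> {x. \<forall>i. x $ Inl i = 0}"
  then show "(Irefl *v a) $ k = (- a) $ k" by (cases k) (auto simp: Irefl_Inl Irefl_Inr)
qed

lemma decomp:
  fixes x :: "real^('n::finite + 'n)"
  shows "(1/2) *\<^sub>R (x + Irefl *v x) \<in> realpart" "(1/2) *\<^sub>R (x - Irefl *v x) \<in> imagpart"
    "x = (1/2) *\<^sub>R (x + Irefl *v x) + (1/2) *\<^sub>R (x - Irefl *v x)"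
   apply (auto simp: realpart_def imagpart_def Irefl_Inl Irefl_Inr algebra_simps)[2]
  by (simp add: vec_eq_iff field_simps)

lemma real_imag_split:
  fixes y z :: "real^('n::finite + 'n)"
  assumes "Irefl *v (y + z) = y - z"
  shows "y \<in> realpart" "z \<in> imagpart"
proof -
  have "\<forall>i. (Irefl *v (y + z)) $ Inr i = (y - z) $ Inr i" "\<forall>i. (Irefl *v (y + z)) $ Inl i = (y - z) $ Inl i"
    using assms by auto
  then show "y \<in> realpart" "z \<in> imagpart"
    by (auto simp: realpart_def imagpart_def Irefl_Inl Irefl_Inr)
qed

theorem proposition3p4:
  fixes \<Psi> :: "real \<Rightarrow> real^('n::finite + 'n)^('n + 'n)" and T :: real
  assumes "smooth_curve \<Psi>"
    and "\<forall>t. symplectic (\<Psi> t)"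
    and "\<Psi> 0 = mat 1"
    and "\<forall>t. \<Psi> (t + T) = \<Psi> t ** \<Psi> T"
    and "\<forall>t. \<Psi> (- t) = Irefl ** \<Psi> t ** Irefl"
  shows "dim {x. (\<Psi> T - mat 1) *v x = 0} = 0 \<longleftrightarrow>
         ((\<lambda>x. \<Psi> (T/2) *v x) ` realpart \<inter> realpart = {0} \<and>
          (\<lambda>x. \<Psi> (T/2) *v x) ` imagpart \<inter> imagpart = {0})"
proof -
  define P where "P = \<Psi> (T/2)"
  define Q where "Q = \<Psi> T"
  let ?I = "Irefl :: real^('n + 'n)^('n + 'n)"
  have "\<Psi> (- (T/2) + T) = \<Psi> (- (T/2)) ** Q" using assms(4) Q_def by blast
  moreover have "- (T/2) + T = T/2" by simp
  ultimately have PQ: "P = ?I ** P ** ?I ** Q" using assms(5) P_def by metis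
  have PQv: "P *v x = ?I *v (P *v (?I *v (Q *v x)))" for x
    by (subst PQ) (simp add: matrix_vector_mul_assoc matrix_mul_assoc)
  have inj: "P *v u = 0 \<Longrightarrow> u = 0" for u
    using sympl_inj assms(2) P_def by blast
  have key: "Q *v x = x \<longleftrightarrow> ?I *v (P *v x) = P *v (?I *v x)" for x
  proof
    assume "Q *v x = x"
    then have "P *v x = ?I *v (P *v (?I *v x))" using PQv by metis
    then show "?I *v (P *v x) = P *v (?I *v x)" by (simp add: Irefl_Irefl)
  next
    assume h: "?I *v (P *v x) = P *v (?I *v x)"
    define d where "d = Q *v x - x"
    have "?I *v (P *v (?I *v x)) = P *v x" using h by (metis Irefl_Irefl)
    then have "?I *v (P *v (?I *v d)) = 0"
      using PQv[of x] by (simp add: d_def matrix_vector_mult_diff_distrib)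
    then have "?I *v (?I *v (P *v (?I *v d))) = 0" by simp
    then have "P *v (?I *v d) = 0" by (simp add: Irefl_Irefl)
    then have "?I *v d = 0" using inj by blast
    then have "?I *v (?I *v d) = 0" by simp
    then have "d = 0" by (simp add: Irefl_Irefl)
    then show "Q *v x = x" by (simp add: d_def)
  qed
  have ker: "{x. (Q - mat 1) *v x = 0} = {x. Q *v x = x}"
    by (auto simp: matrix_vector_mult_diff_rdistrib)
  have zr: "0 \<in> realpart" "0 \<in> imagpart" by (auto simp: realpart_def imagpart_def)
  show ?thesis
    unfolding P_def[symmetric] Q_def[symmetric] ker
  proof
    assume "dim {x. Q *v x = x} = 0"
    then have K: "Q *v x = x \<Longrightarrow> x = 0" for x by auto
    have R: "y = 0" if "a \<in> realpart" "y = P *v a" "y \<in> realpart" for a y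
    proof -
      have "?I *v (P *v a) = P *v (?I *v a)" using that Irefl_real by metis
      then have "a = 0" using K key by blast
      then show ?thesis using that by simp
    qed
    have Im: "y = 0" if "a \<in> imagpart" "y = P *v a" "y \<in> imagpart" for a y
    proof -
      have neg: "M *v (- v) = - (M *v v)" for M :: "real^('n + 'n)^('n + 'n)" and v
        by (metis diff_0 matrix_vector_mult_diff_distrib matrix_vector_mult_0_right)
      have "?I *v (P *v a) = P *v (?I *v a)" using that Irefl_imag neg by metis
      then have "a = 0" using K key by blast
      then show ?thesis using that by simp
    qed
    show "(\<lambda>x. P *v x) ` realpart \<inter> realpart = {0} \<and> (\<lambda>x. P *v x) ` imagpart \<inter> imagpart = {0}"
      using R Im zr by fastforce
  next
    assume A: "(\<lambda>x. P *v x) ` realpart \<inter> realpart = {0} \<and> (\<lambda>x. P *v x) ` imagpart \<inter> imagpart = {0}"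
    have "x = 0" if "Q *v x = x" for x
    proof -
      define a where "a = (1/2) *\<^sub>R (x + ?I *v x)"
      define b where "b = (1/2) *\<^sub>R (x - ?I *v x)"
      have ar: "a \<in> realpart" and bi: "b \<in> imagpart" and xab: "x = a + b"
        using decomp a_def b_def by blast+
      have Ix: "?I *v x = a - b" using xab Irefl_real[OF ar] Irefl_imag[OF bi]
        by (simp add: matrix_vector_right_distrib)
      have "?I *v (P *v x) = P *v (?I *v x)" using key that by blast
      moreover have "P *v x = P *v a + P *v b" by (simp add: xab matrix_vector_right_distrib)
      moreover have "P *v (?I *v x) = P *v a - P *v b" by (simp only: Ix matrix_vector_mult_diff_distrib)
      ultimately have "?I *v (P *v a + P *v b) = P *v a - P *v b" by metis
      then have "P *v a \<in> realpart" "P *v b \<in> imagpart" using real_imag_split by blast+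
      then have "P *v a = 0" "P *v b = 0" using A ar bi by blast+
      then show "x = 0" using inj xab by (metis add.right_neutral)
    qed
    then show "dim {x. Q *v x = x} = 0" by auto
  qed
qed

end
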